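(* Let $C>0$ and $\epsilon\in(0,1)$. The following inclusions hold as germs at $\infty$ (i.e. each holds after removing from the left-hand set all points of modulus at most some $R>0$): (1) for $D>0$, $\epsilon'\in(\epsilon,1)$ and $\delta>0$, we have $T(U_D^{\epsilon'},\delta)\subseteq U_C^\epsilon$; (2) for $D>C$ and $\delta>0$, we have $T(U_D^\epsilon,\delta)\subseteq U_C^\epsilon$; (3) for $\nu>0$, we have $\nu\cdot U_C^\epsilon\subseteq U_{\nu C}^\epsilon$ if $\nu\le1$, and $\nu\cdot U_C^\epsilon\subseteq U_C^\epsilon$ if $\nu\ge1$; (4) $U_C^\epsilon+U_C^\epsilon\subseteq U_{C/2}^\epsilon$; (5) for any standard power domain $U$, there exists $a>0$ such that $\log\left(U_C^\epsilon\right)\cap H(a)\subseteq U\cap H(a)$.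
   Context: For $a\in\mathbb{R}$, $H(a):=\{z\in\mathbb{C}:\operatorname{Re}z>a\}$. For $C>0$ and $\epsilon\in(0,1)$, let $\phi_C^\epsilon:H(0)\to\mathbb{C}$, $\phi_C^\epsilon(z)=z+C(1+z)^\epsilon$ (principal branch of the power), and let the standard power domain be $U_C^\epsilon:=\phi_C^\epsilon(H(0))$; a standard power domain is any set of this form. For $A\subseteq\mathbb{C}$ and $\delta>0$, $T(A,\delta):=\{z\in\mathbb{C}:d(z,A)<\delta\}$. In (3), $\nu\cdot U=\{\nu z:z\in U\}$; in (4), $U+U$ is the Minkowski sum; in (5), $\log$ is the principal branch of the logarithm on $\mathbb{C}\setminus(-\infty,0]$. *)

theory Defs
  imports "HOL-Analysis.Analysis"
begin

definition Hplane :: "real \<Rightarrow> complex set" where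
  "Hplane a = {z. Re z > a}"

text \<open>phi_C^eps(z) = z + C (1+z)^eps, principal branch (complex powr uses Ln).\<close>
definition phiCe :: "real \<Rightarrow> real \<Rightarrow> complex \<Rightarrow> complex" where
  "phiCe C eps z = z + complex_of_real C * (1 + z) powr complex_of_real eps"

definition std_power_domain :: "real \<Rightarrow> real \<Rightarrow> complex set" where
  "std_power_domain C eps = phiCe C eps ` Hplane 0"

definition is_std_power_domain :: "complex set \<Rightarrow> bool" where
  "is_std_power_domain U \<longleftrightarrow> (\<exists>C eps. C > 0 \<and> 0 < eps \<and> eps < 1 \<and> U = std_power_domain C eps)"

definition tube :: "complex set \<Rightarrow> real \<Rightarrow> complex set" where
  "tube A \<delta> = {z. infdist z A < \<delta>}"

definition germ_subset :: "complex set \<Rightarrow> complex set \<Rightarrow> bool" where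
  "germ_subset A B \<longleftrightarrow> (\<exists>R>0. \<forall>z\<in>A. norm z > R \<longrightarrow> z \<in> B)"

end

theory Submission
  imports Defs "HOL-Real_Asymp.Real_Asymp"
begin


lemma P_norm: "norm (u powr complex_of_real e) = norm u powr e"
  by (simp add: norm_powr_real_powr')

lemma P_Re_formula:
  assumes "u \<noteq> 0"
  shows "Re (u powr complex_of_real e) = norm u powr e * cos (e * Im (Ln u))"
proof -
  have "u powr complex_of_real e = exp (complex_of_real e * Ln u)"
    using assms by (simp add: powr_def)
  also have "Re \<dots> = exp (e * ln (norm u)) * cos (e * Im (Ln u))"
    using assms by (simp add: Re_exp)
  also have "exp (e * ln (norm u)) = norm u powr e"
    using assms by (simp add: powr_def)
  finally show ?thesis .
qed

lemma P_Re_lower: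
  assumes "0 < e" "e < 1" "Re u > 0"
  shows "cos (e * pi / 2) * norm u powr e \<le> Re (u powr complex_of_real e)"
proof -
  have u: "u \<noteq> 0" using assms by auto
  have b: "\<bar>Im (Ln u)\<bar> < pi/2" using Re_Ln_pos_lt_imp assms by blast
  have "cos (e * pi / 2) \<le> cos (\<bar>e * Im (Ln u)\<bar>)"
  proof (rule cos_monotone_0_pi_le)
    show "0 \<le> \<bar>e * Im (Ln u)\<bar>" by simp
    have "\<bar>e * Im (Ln u)\<bar> = e * \<bar>Im (Ln u)\<bar>" using assms by (simp add: abs_mult)
    also have "\<dots> \<le> e * (pi/2)" using b assms by (intro mult_left_mono) auto
    finally show "\<bar>e * Im (Ln u)\<bar> \<le> e * pi / 2" by simp
    show "e * pi / 2 \<le> pi" using assms by (simp add: field_simps)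
  qed
  then have "cos (e * pi / 2) \<le> cos (e * Im (Ln u))" by simp
  then show ?thesis using P_Re_formula[OF u, of e]
    by (metis mult.commute mult_right_mono powr_ge_zero)
qed

lemma P_scale:
  assumes "\<mu> > 0"
  shows "(complex_of_real \<mu> * u) powr complex_of_real e = complex_of_real (\<mu> powr e) * u powr complex_of_real e"
proof -
  have "(complex_of_real \<mu> * u) powr complex_of_real e = complex_of_real \<mu> powr complex_of_real e * u powr complex_of_real e"
    by (rule powr_times_real_left) (use assms in auto)
  moreover have "complex_of_real \<mu> powr complex_of_real e = complex_of_real (\<mu> powr e)"
    by (rule powr_of_real) (use assms in auto)
  ultimately show ?thesis by simp
qed

lemma P_lip:
  assumes "0 < e" "e < 1" "M > 0"
    and seg: "\<And>\<xi>. \<xi> \<in> closed_segment a b \<Longrightarrow> \<xi> \<notin> \<real>\<^sub>\<le>\<^sub>0 \<and> M \<le> norm \<xi>"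
  shows "norm (b powr complex_of_real e - a powr complex_of_real e) \<le> e * M powr (e - 1) * norm (b - a)"
proof -
  have d: "((\<lambda>z. z powr complex_of_real e) has_field_derivative
      complex_of_real e * z powr (complex_of_real e - 1)) (at z within closed_segment a b)"
    if z: "z \<in> closed_segment a b" for z
    apply (rule has_field_derivative_at_within)
    apply (rule has_field_derivative_powr)
    using seg[OF z] by blast
  have n: "norm (complex_of_real e * z powr (complex_of_real e - 1)) \<le> e * M powr (e - 1)"
    if z: "z \<in> closed_segment a b" for z
  proof -
    have "complex_of_real e - 1 = complex_of_real (e - 1)" by simp
    then have "norm (complex_of_real e * z powr (complex_of_real e - 1)) = e * norm z powr (e - 1)"
      using assms by (simp only: norm_mult norm_powr_real_powr' Reals_of_real Re_complex_of_real norm_of_real)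
    also have "\<dots> \<le> e * M powr (e - 1)"
      using seg[OF z] assms by (intro mult_left_mono powr_mono2') auto
    finally show ?thesis .
  qed
  show ?thesis
    using field_differentiable_bound[OF convex_closed_segment, of a b "\<lambda>z. z powr complex_of_real e"
        "\<lambda>z. complex_of_real e * z powr (complex_of_real e - 1)" "e * M powr (e - 1)" b a] d n
    by simp
qed

lemma P_pert:
  assumes "0 < e" "e < 1" "a \<noteq> 0" "Re a \<ge> 0" "norm (v - a) \<le> norm a / 2"
  shows "norm (v powr complex_of_real e - a powr complex_of_real e) \<le> e * (norm a / 2) powr (e - 1) * norm (v - a)"
proof (rule P_lip)
  show "norm a / 2 > 0" using assms by simp
  fix \<xi> assume "\<xi> \<in> closed_segment a v"
  then have d: "norm (\<xi> - a) \<le> norm (v - a)"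
    using dist_in_closed_segment[of \<xi> a v] by (simp add: dist_norm norm_minus_commute)
  then have d2: "norm (\<xi> - a) \<le> norm a / 2" using assms by linarith
  have "norm a - norm (\<xi> - a) \<le> norm \<xi>" using norm_triangle_ineq2[of a "a - \<xi>"]
    by (simp add: norm_minus_commute)
  then have "norm a / 2 \<le> norm \<xi>" using d2 by linarith
  moreover have "\<xi> \<notin> \<real>\<^sub>\<le>\<^sub>0"
  proof
    assume "\<xi> \<in> \<real>\<^sub>\<le>\<^sub>0"
    then have "Im \<xi> = 0" "Re \<xi> \<le> 0" by (auto simp: complex_nonpos_Reals_iff)
    have e1: "(norm (\<xi> - a))^2 = (Re \<xi> - Re a)^2 + (Im \<xi> - Im a)^2" by (simp add: cmod_power2)
    have e2: "(norm a)^2 = (Re a)^2 + (Im a)^2" by (simp add: cmod_power2)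
    have "(Re a)^2 \<le> (Re a - Re \<xi>)^2" using \<open>Re \<xi> \<le> 0\<close> assms(4)
      by (intro power_mono) auto
    then have "(Re a)^2 \<le> (Re \<xi> - Re a)^2" by (simp add: power2_commute)
    then have "(norm (\<xi> - a))^2 \<ge> (norm a)^2" unfolding e1 e2 using \<open>Im \<xi> = 0\<close> by simp
    then have "norm (\<xi> - a) \<ge> norm a" by (rule power2_le_imp_le) simp
    moreover have "norm a > 0" using assms(3) by simp
    ultimately show False using d2 by linarith
  qed
  ultimately show "\<xi> \<notin> \<real>\<^sub>\<le>\<^sub>0 \<and> norm a / 2 \<le> norm \<xi>" by simp
qed (use assms in auto)


lemma suff:
  assumes C: "C > 0" and e: "0 < e" "e < 1" and eta: "\<eta> > 0"
  shows "\<exists>N0>0. \<forall>w. Re w > 0 \<longrightarrow> N0 \<le> norm (1 + w) \<longrightarrow>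
     \<eta> * norm (1 + w) powr e < Re w - C * Re ((1 + w) powr complex_of_real e) \<longrightarrow>
     w \<in> std_power_domain C e"
proof -
  have ev1: "eventually (\<lambda>N::real. (C+\<eta>) * N powr e \<le> N/2) at_top"
    using C e eta by real_asymp
  have ev2: "eventually (\<lambda>N::real. C*e*(C+\<eta>)*(N/2) powr (e-1) \<le> \<eta>) at_top"
    using C e eta by real_asymp
  obtain N1 where N1: "\<And>N. N \<ge> N1 \<Longrightarrow> (C+\<eta>) * N powr e \<le> N/2 \<and> C*e*(C+\<eta>)*(N/2) powr (e-1) \<le> \<eta>"
    using eventually_conj[OF ev1 ev2] unfolding eventually_at_top_linorder by blast
  define N0 where "N0 = max N1 1"
  have "\<forall>w. Re w > 0 \<longrightarrow> N0 \<le> norm (1 + w) \<longrightarrow>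
     \<eta> * norm (1 + w) powr e < Re w - C * Re ((1 + w) powr complex_of_real e) \<longrightarrow>
     w \<in> std_power_domain C e"
  proof (intro allI impI)
    fix w :: complex
    assume w: "Re w > 0" and wN: "N0 \<le> norm (1 + w)"
      and wi: "\<eta> * norm (1 + w) powr e < Re w - C * Re ((1 + w) powr complex_of_real e)"
    define N where "N = norm (1 + w)"
    have Npos: "N > 0" "N \<ge> N1" using wN unfolding N0_def N_def by auto
    note NN = N1[OF Npos(2)]
    define k where "k = C * e * (N/2) powr (e-1)"
    have k0: "k \<ge> 0" unfolding k_def using C e by simp
    have kCe: "k * (C + \<eta>) \<le> \<eta>" using NN unfolding k_def by (simp add: algebra_simps)
    have k1: "k < 1"
    proof (rule ccontr)
      assume "\<not> k < 1"
      then have "1 * (C + \<eta>) \<le> k * (C + \<eta>)" by (intro mult_right_mono) (use C eta in auto)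
      then show False using kCe C by simp
    qed
    define w0 where "w0 = w - C * (1 + w) powr complex_of_real e"
    define r where "r = \<eta> * N powr e"
    define T where "T = (\<lambda>z. w - C * (1 + z) powr complex_of_real e)"
    have r0: "r \<ge> 0" unfolding r_def using eta by simp
    have Rew0: "Re w0 > r" using wi unfolding w0_def r_def N_def by simp
    have nP: "norm ((1 + w) powr complex_of_real e) = N powr e" unfolding N_def by (rule P_norm)
    have ww0: "norm (w - w0) = C * N powr e" unfolding w0_def using nP C by (simp add: norm_mult)
    have inK: "Re \<xi> > 0 \<and> norm (\<xi> - (1 + w)) \<le> N / 2" if "\<xi> \<in> cball (1 + w0) r" for \<xi>
    proof -
      have d: "norm (\<xi> - (1 + w0)) \<le> r" using that by (simp add: dist_norm norm_minus_commute)
      have "Re (1 + w0) - Re \<xi> \<le> norm (\<xi> - (1 + w0))"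
        using abs_Re_le_cmod[of "\<xi> - (1 + w0)"] by simp
      then have "Re \<xi> > 0" using d Rew0 by simp
      moreover have "norm (\<xi> - (1 + w)) \<le> norm (\<xi> - (1 + w0)) + norm (w - w0)"
        using norm_triangle_ineq[of "\<xi> - (1 + w0)" "w0 - w"] by (simp add: norm_minus_commute algebra_simps)
      then have "norm (\<xi> - (1 + w)) \<le> (C + \<eta>) * N powr e" using d ww0 unfolding r_def by (simp add: algebra_simps)
      ultimately show ?thesis using NN by simp
    qed
    have K1: "Re z > 0 \<and> norm (z - w) \<le> N / 2" if "z \<in> cball w0 r" for z
    proof -
      have "1 + z \<in> cball (1 + w0) r" using that by (simp add: dist_norm)
      from inK[OF this] have "Re (1 + z) > 0 \<and> norm (z - w) \<le> N / 2" by simp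
      moreover have "Re z > 0" using that Rew0 abs_Re_le_cmod[of "w0 - z"] by (simp add: dist_norm)
      ultimately show ?thesis by simp
    qed
    have maps: "T ` cball w0 r \<subseteq> cball w0 r"
    proof
      fix y assume "y \<in> T ` cball w0 r"
      then obtain z where z: "z \<in> cball w0 r" and y: "y = T z" by auto
      have a0: "1 + w \<noteq> 0" using Npos unfolding N_def by auto
      have "norm ((1 + z) powr complex_of_real e - (1 + w) powr complex_of_real e)
          \<le> e * (norm (1 + w) / 2) powr (e - 1) * norm ((1 + z) - (1 + w))"
        by (rule P_pert) (use e a0 w K1[OF z] N_def in auto)
      also have "\<dots> \<le> e * (N / 2) powr (e - 1) * ((C + \<eta>) * N powr e)"
      proof -
        have "norm (z - w) \<le> norm (z - w0) + norm (w - w0)"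
          using norm_triangle_ineq[of "z - w0" "w0 - w"] by (simp add: norm_minus_commute algebra_simps)
        also have "\<dots> \<le> r + C * N powr e" using z ww0 by (simp add: dist_norm norm_minus_commute)
        finally have "norm (z - w) \<le> (C + \<eta>) * N powr e" unfolding r_def by (simp add: algebra_simps)
        then show ?thesis unfolding N_def using e by (intro mult_left_mono) auto
      qed
      finally have "C * norm ((1 + z) powr complex_of_real e - (1 + w) powr complex_of_real e)
          \<le> C * (e * (N / 2) powr (e - 1) * ((C + \<eta>) * N powr e))" using C by simp
      also have "\<dots> = (k * (C + \<eta>)) * N powr e" unfolding k_def by (simp add: algebra_simps)
      also have "\<dots> \<le> \<eta> * N powr e" using kCe by (intro mult_right_mono) auto
      moreover have "y - w0 = complex_of_real C * ((1 + w) powr complex_of_real e - (1 + z) powr complex_of_real e)"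
        unfolding y T_def w0_def by (simp add: algebra_simps)
      then have "norm (y - w0) = C * norm ((1 + z) powr complex_of_real e - (1 + w) powr complex_of_real e)"
        using C by (simp add: norm_mult norm_minus_commute)
      ultimately have "norm (y - w0) \<le> r" unfolding r_def by linarith
      then show "y \<in> cball w0 r" by (simp add: dist_norm norm_minus_commute)
    qed
    have lip: "dist (T x) (T y) \<le> k * dist x y" if x: "x \<in> cball w0 r" and y: "y \<in> cball w0 r" for x y
    proof -
      have "norm ((1 + x) powr complex_of_real e - (1 + y) powr complex_of_real e)
          \<le> e * (N / 2) powr (e - 1) * norm ((1 + x) - (1 + y))"
      proof (rule P_lip)
        fix \<xi> assume \<xi>: "\<xi> \<in> closed_segment (1 + y) (1 + x)"
        have "closed_segment (1 + y) (1 + x) \<subseteq> cball (1 + w0) r"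
          using x y by (intro closed_segment_subset convex_cball) (auto simp: dist_norm)
        with \<xi> have "\<xi> \<in> cball (1 + w0) r" by blast
        from inK[OF this] have "Re \<xi> > 0" and dd: "norm (\<xi> - (1 + w)) \<le> N / 2" by auto
        then have "\<xi> \<notin> \<real>\<^sub>\<le>\<^sub>0" by (auto simp: complex_nonpos_Reals_iff)
        moreover have "N - norm (\<xi> - (1 + w)) \<le> norm \<xi>"
          using norm_triangle_ineq2[of "1 + w" "1 + w - \<xi>"] unfolding N_def
          by (simp add: norm_minus_commute)
        ultimately show "\<xi> \<notin> \<real>\<^sub>\<le>\<^sub>0 \<and> N / 2 \<le> norm \<xi>" using dd by simp
      qed (use e Npos in auto)
      then have "C * norm ((1 + x) powr complex_of_real e - (1 + y) powr complex_of_real e)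
          \<le> k * norm (x - y)" unfolding k_def using C by (simp add: algebra_simps)
      moreover have "T x - T y = complex_of_real C * ((1 + y) powr complex_of_real e - (1 + x) powr complex_of_real e)"
        unfolding T_def by (simp add: algebra_simps)
      then have "dist (T x) (T y) = C * norm ((1 + x) powr complex_of_real e - (1 + y) powr complex_of_real e)"
        using C by (simp add: dist_norm norm_mult norm_minus_commute)
      ultimately show ?thesis by (simp add: dist_norm)
    qed
    have cc: "complete (cball w0 r)" by (simp add: complete_eq_closed)
    have "\<exists>!z\<in>cball w0 r. T z = z"
      by (rule Banach_fix[OF cc _ k0 k1 maps lip]) (use r0 in auto)
    then obtain z where z: "z \<in> cball w0 r" "T z = z" by blast
    have "w = phiCe C e z" using z(2) unfolding T_def phiCe_def by (simp add: algebra_simps)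
    moreover have "z \<in> Hplane 0" using K1[OF z(1)] unfolding Hplane_def by simp
    ultimately show "w \<in> std_power_domain C e" unfolding std_power_domain_def by blast
  qed
  moreover have "N0 > 0" unfolding N0_def by simp
  ultimately show ?thesis by blast
qed


lemma Re_P_le: "Re (u powr complex_of_real e) \<le> norm u powr e"
  using complex_Re_le_cmod[of "u powr complex_of_real e"] P_norm[of u e] by simp

lemma U_Re_pos:
  assumes "C > 0" "0 < e" "e < 1" "u \<in> std_power_domain C e"
  shows "Re u > 0"
proof -
  obtain z where z: "Re z > 0" "u = z + complex_of_real C * (1 + z) powr complex_of_real e"
    using assms(4) unfolding std_power_domain_def phiCe_def Hplane_def by auto
  have "e * pi \<le> 1 * pi" using assms by (intro mult_right_mono) auto
  moreover have "0 \<le> e * pi" using assms by simp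
  ultimately have "0 \<le> cos (e * pi / 2)" using pi_gt_zero by (intro cos_ge_zero) linarith+
  then have "0 \<le> cos (e * pi / 2) * norm (1 + z) powr e" by simp
  also have "\<dots> \<le> Re ((1 + z) powr complex_of_real e)"
    using z assms by (intro P_Re_lower) auto
  finally have "0 \<le> C * Re ((1 + z) powr complex_of_real e)" using assms by simp
  then show ?thesis using z by simp
qed

lemma part5:
  assumes "is_std_power_domain U" "C > 0" "0 < eps" "eps < 1"
  shows "\<exists>a>0. germ_subset (Ln ` std_power_domain C eps \<inter> Hplane a) (U \<inter> Hplane a)"
proof -
  obtain D e where D: "D > 0" "0 < e" "e < 1" and U: "U = std_power_domain D e"
    using assms unfolding is_std_power_domain_def by blast
  obtain N0 where N0: "N0 > 0" and suf: "\<And>w. Re w > 0 \<Longrightarrow> N0 \<le> norm (1 + w) \<Longrightarrow>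
     1 * norm (1 + w) powr e < Re w - D * Re ((1 + w) powr complex_of_real e) \<Longrightarrow>
     w \<in> std_power_domain D e"
    using suff[OF D(1) D(2) D(3), of 1] by auto
  have ev1: "eventually (\<lambda>x::real. (1 + D) * (1 + x + pi) powr e < x) at_top"
    using D by real_asymp
  have ev2: "eventually (\<lambda>x::real. N0 \<le> 1 + x) at_top" by real_asymp
  obtain a0 where a0: "\<And>x. x \<ge> a0 \<Longrightarrow> (1 + D) * (1 + x + pi) powr e < x \<and> N0 \<le> 1 + x"
    using eventually_conj[OF ev1 ev2] unfolding eventually_at_top_linorder by blast
  define a where "a = max a0 1"
  have "germ_subset (Ln ` std_power_domain C eps \<inter> Hplane a) (U \<inter> Hplane a)"
    unfolding germ_subset_def
  proof (intro exI[of _ 1] conjI ballI impI)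
    fix v assume v: "v \<in> Ln ` std_power_domain C eps \<inter> Hplane a"
    then obtain u where vu: "v = Ln u" and uU: "u \<in> std_power_domain C eps" by auto
    have va: "Re v > a" using v unfolding Hplane_def by auto
    have "u \<noteq> 0" using U_Re_pos[OF assms(2-4) uU] by auto
    then have imv: "\<bar>Im v\<bar> \<le> pi" using vu Im_Ln_le_pi[of u] mpi_less_Im_Ln[of u] by auto
    define x where "x = Re v"
    have xa: "x \<ge> a0" "x > 0" using va unfolding x_def a_def by auto
    note A = a0[OF xa(1)]
    have n1: "norm (1 + v) \<le> 1 + x + pi"
      using cmod_le[of "1 + v"] imv xa unfolding x_def by simp
    have n2: "1 + x \<le> norm (1 + v)"
      using complex_Re_le_cmod[of "1 + v"] unfolding x_def by simp
    have pw: "norm (1 + v) powr e \<le> (1 + x + pi) powr e"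
      using n1 D by (intro powr_mono2) auto
    have "Re ((1 + v) powr complex_of_real e) \<le> norm (1 + v) powr e" by (rule Re_P_le)
    have "1 * norm (1 + v) powr e < Re v - D * Re ((1 + v) powr complex_of_real e)"
    proof -
      have "D * Re ((1 + v) powr complex_of_real e) \<le> D * (1 + x + pi) powr e"
        using \<open>Re ((1 + v) powr complex_of_real e) \<le> norm (1 + v) powr e\<close> pw D
        by (intro mult_left_mono) auto
      then show ?thesis using A pw unfolding x_def by (simp add: algebra_simps)
    qed
    then have "v \<in> U" unfolding U using suf[of v] xa n2 A unfolding x_def by simp
    then show "v \<in> U \<inter> Hplane a" using va unfolding Hplane_def by simp
  qed simp
  moreover have "a > 0" unfolding a_def by simp
  ultimately show ?thesis by blast
qed


lemma tube_point:
  assumes "w \<in> tube U \<delta>" "U \<noteq> {}"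
  shows "\<exists>u\<in>U. norm (w - u) < \<delta>"
proof (rule ccontr)
  assume "\<not> ?thesis"
  then have "\<forall>u\<in>U. \<delta> \<le> dist w u" by (auto simp: dist_norm not_less)
  then have "\<delta> \<le> infdist w U" unfolding infdist_notempty[OF assms(2)]
    by (intro cINF_greatest assms(2)) auto
  then show False using assms(1) unfolding tube_def by simp
qed

lemma U_nonempty: "std_power_domain C e \<noteq> {}"
  unfolding std_power_domain_def Hplane_def by (auto intro!: exI[of _ 1])

lemma cpos: "0 < e \<Longrightarrow> e < 1 \<Longrightarrow> cos (e * pi / 2) > 0"
proof -
  assume e: "0 < e" "e < 1"
  have "e * pi < 1 * pi" using e by (intro mult_strict_right_mono) auto
  moreover have "0 < e * pi" using e by simp
  ultimately show ?thesis using pi_gt_zero by (intro cos_gt_zero) linarith+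
qed

lemma germ_crit:
  assumes Ct: "Ct > 0" and e: "0 < e" "e < 1" and eta: "\<eta> > 0" and K: "K > 0"
    and ev: "eventually Q at_top"
    and rep: "\<And>w. w \<in> S \<Longrightarrow> \<exists>A. norm (1 + w) \<le> K * A \<and>
       (Q A \<longrightarrow> Re w > 0 \<and> \<eta> * norm (1 + w) powr e < Re w - Ct * Re ((1 + w) powr complex_of_real e))"
  shows "germ_subset S (std_power_domain Ct e)"
proof -
  obtain N0 where N0: "N0 > 0" and suf: "\<And>w. Re w > 0 \<Longrightarrow> N0 \<le> norm (1 + w) \<Longrightarrow>
     \<eta> * norm (1 + w) powr e < Re w - Ct * Re ((1 + w) powr complex_of_real e) \<Longrightarrow>
     w \<in> std_power_domain Ct e"
    using suff[OF Ct e eta] by auto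
  obtain A0 where A0: "\<And>A. A \<ge> A0 \<Longrightarrow> Q A" using ev unfolding eventually_at_top_linorder by blast
  define R where "R = max (1 + N0) (1 + K * A0) + 1"
  show ?thesis unfolding germ_subset_def
  proof (intro exI[of _ R] conjI ballI impI)
    show "R > 0" unfolding R_def using N0 by simp
    fix w assume w: "w \<in> S" "norm w > R"
    obtain A where A: "norm (1 + w) \<le> K * A"
      and AQ: "Q A \<longrightarrow> Re w > 0 \<and> \<eta> * norm (1 + w) powr e < Re w - Ct * Re ((1 + w) powr complex_of_real e)"
      using rep[OF w(1)] by blast
    have n1: "norm w - 1 \<le> norm (1 + w)" using norm_triangle_ineq2[of w "-1"] by (simp add: add.commute)
    then have "K * A0 < K * A" using A w(2) unfolding R_def by linarith
    then have "A0 \<le> A" using K by simp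
    then have "Q A" by (rule A0)
    with AQ have "Re w > 0" "\<eta> * norm (1 + w) powr e < Re w - Ct * Re ((1 + w) powr complex_of_real e)" by auto
    moreover have "N0 \<le> norm (1 + w)" using n1 w(2) unfolding R_def by linarith
    ultimately show "w \<in> std_power_domain Ct e" using suf by blast
  qed
qed

lemma asymp_mixed:
  assumes e: "0 < e" "e < 1" and M: "M > 0" and B: "B \<ge> 0" and D: "D \<ge> 0" and d: "d1 \<ge> 0" "d2 \<ge> 0"
    and \<kappa>: "\<kappa> > 0"
  shows "eventually (\<lambda>A::real. d1 + B * (\<kappa> * A) powr (e - 1) * (D * A powr e + d2) < M * A powr e) at_top"
proof -
  define \<theta> where "\<theta> = M / (2 * (B * D + 1))"
  have th: "\<theta> > 0" unfolding \<theta>_def using M B D by (simp add: add_nonneg_pos)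
  have thB: "B * \<theta> * D \<le> M / 2"
  proof -
    have "B * \<theta> * D = (B * D) * M / (2 * (B * D + 1))" unfolding \<theta>_def by (simp add: field_simps)
    also have "\<dots> \<le> (B * D + 1) * M / (2 * (B * D + 1))"
      using M B D by (intro divide_right_mono mult_right_mono) auto
    also have "\<dots> = M / 2"
    proof -
      have "0 \<le> B * D" using B D by simp
      then have h: "B * D + 1 \<noteq> 0" by linarith
      have "(B * D + 1) * M / (2 * (B * D + 1)) = ((B * D + 1) * M) / ((B * D + 1) * 2)"
        by (simp add: mult.commute)
      also have "\<dots> = M / 2" using h by (rule mult_divide_mult_cancel_left)
      finally show ?thesis .
    qed
    finally show ?thesis .
  qed
  have ev1: "eventually (\<lambda>A::real. (\<kappa> * A) powr (e - 1) \<le> \<theta>) at_top"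
    using e th \<kappa> by real_asymp
  have ev2: "eventually (\<lambda>A::real. d1 + B * \<theta> * d2 < M / 2 * A powr e) at_top"
    using e M by real_asymp
  have ev3: "eventually (\<lambda>A::real. A > 0) at_top" by real_asymp
  show ?thesis using ev1 ev2 ev3
  proof eventually_elim
    case (elim A)
    have "B * (\<kappa> * A) powr (e - 1) * (D * A powr e + d2) \<le> B * \<theta> * (D * A powr e + d2)"
      using elim B D d by (intro mult_right_mono mult_left_mono) auto
    also have "\<dots> = (B * \<theta> * D) * A powr e + B * \<theta> * d2" by (simp add: algebra_simps)
    also have "\<dots> \<le> M / 2 * A powr e + B * \<theta> * d2" using thB by (intro add_right_mono mult_right_mono) auto
    finally show ?case using elim by simp
  qed
qed

lemma U_rep:
  assumes "u \<in> std_power_domain C e"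
  obtains z where "Re z > 0" "u = z + complex_of_real C * (1 + z) powr complex_of_real e"
  using assms unfolding std_power_domain_def phiCe_def Hplane_def by auto

lemma norm_1z: "Re z > 0 \<Longrightarrow> 1 \<le> norm (1 + z)"
  using complex_Re_le_cmod[of "1 + z"] by simp

lemma powr_le_self: "(A::real) \<ge> 1 \<Longrightarrow> e \<le> 1 \<Longrightarrow> A powr e \<le> A"
  using powr_mono[of e 1 A] by simp

lemma part1:
  assumes C: "C > 0" and e: "0 < e" "e < 1" and D: "D > 0" and e': "e < e'" "e' < 1" and dl: "\<delta> > 0"
  shows "germ_subset (tube (std_power_domain D e') \<delta>) (std_power_domain C e)"
proof -
  define K where "K = 1 + D + \<delta>"
  define c' where "c' = cos (e' * pi / 2)"
  have c': "c' > 0" unfolding c'_def using cpos e e' by simp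
  have K: "K > 0" unfolding K_def using D dl by simp
  have ev: "eventually (\<lambda>A::real. \<delta> + (C + 1) * K powr e * A powr e < (D * c') * A powr e') at_top"
    using e e' C K D c' by real_asymp
  show ?thesis
  proof (rule germ_crit[OF C e _ K ev, of 1])
    fix w assume "w \<in> tube (std_power_domain D e') \<delta>"
    then obtain u where u: "u \<in> std_power_domain D e'" "norm (w - u) < \<delta>"
      using tube_point U_nonempty by blast
    obtain z where z: "Re z > 0" "u = z + complex_of_real D * (1 + z) powr complex_of_real e'"
      using U_rep[OF u(1)] by blast
    define A where "A = norm (1 + z)"
    have A1: "A \<ge> 1" unfolding A_def using norm_1z z by simp
    have nP': "norm ((1 + z) powr complex_of_real e') = A powr e'" unfolding A_def by (rule P_norm)
    have "norm (1 + w) \<le> norm (1 + z) + norm (complex_of_real D * (1 + z) powr complex_of_real e') + norm (w - u)"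
      using norm_triangle_ineq[of "1 + z + complex_of_real D * (1 + z) powr complex_of_real e'" "w - u"]
        norm_triangle_ineq[of "1 + z" "complex_of_real D * (1 + z) powr complex_of_real e'"] z(2)
      by (simp add: algebra_simps)
    also have "\<dots> \<le> A + D * A + \<delta> * A"
    proof -
      have "D * A powr e' \<le> D * A" using D A1 e' by (intro mult_left_mono powr_le_self) auto
      moreover have "\<delta> \<le> \<delta> * A" using dl A1 by simp
      moreover have "norm (complex_of_real D * (1 + z) powr complex_of_real e') = D * A powr e'"
        using nP' D by (simp add: norm_mult)
      ultimately show ?thesis using u(2) unfolding A_def by linarith
    qed
    finally have nw: "norm (1 + w) \<le> K * A" unfolding K_def by (simp add: algebra_simps)
    moreover have "Q \<longrightarrow> Re w > 0 \<and> 1 * norm (1 + w) powr e < Re w - C * Re ((1 + w) powr complex_of_real e)"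
      if Q: "\<delta> + (C + 1) * K powr e * A powr e < (D * c') * A powr e'" for Q
    proof -
      have "Re u - Re w \<le> norm (w - u)" using abs_Re_le_cmod[of "w - u"] by simp
      moreover have "c' * A powr e' \<le> Re ((1 + z) powr complex_of_real e')"
        unfolding c'_def A_def using P_Re_lower[of e' "1 + z"] e e' z by simp
      then have "D * (c' * A powr e') \<le> D * Re ((1 + z) powr complex_of_real e')" using D by simp
      ultimately have Rw: "Re w > D * c' * A powr e' - \<delta>" using u(2) z by simp
      have nwe: "norm (1 + w) powr e \<le> K powr e * A powr e"
        using nw e K A1 by (metis norm_ge_zero powr_mono2 powr_mult less_imp_le order_trans zero_le_one)
      have "Re ((1 + w) powr complex_of_real e) \<le> norm (1 + w) powr e" by (rule Re_P_le)
      then have "C * Re ((1 + w) powr complex_of_real e) \<le> C * (K powr e * A powr e)"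
        using nwe C by (intro mult_left_mono) auto
      then have "1 * norm (1 + w) powr e < Re w - C * Re ((1 + w) powr complex_of_real e)"
        using nwe Rw Q by (simp add: algebra_simps)
      moreover have "Re w > 0" using Rw Q C by (smt (verit) mult_nonneg_nonneg powr_ge_zero)
      ultimately show ?thesis by simp
    qed
    ultimately show "\<exists>A. norm (1 + w) \<le> K * A \<and> (\<delta> + (C + 1) * K powr e * A powr e < D * c' * A powr e' \<longrightarrow>
        Re w > 0 \<and> 1 * norm (1 + w) powr e < Re w - C * Re ((1 + w) powr complex_of_real e))"
      by blast
  qed simp
qed


lemma Re_diff_le: "Re a \<le> Re b + norm (a - b)"
  using abs_Re_le_cmod[of "a - b"] by simp

lemma part2:
  assumes C: "C > 0" and e: "0 < e" "e < 1" and D: "D > C" and dl: "\<delta> > 0"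
  shows "germ_subset (tube (std_power_domain D e) \<delta>) (std_power_domain C e)"
proof -
  define K where "K = 1 + D + \<delta>"
  define c where "c = cos (e * pi / 2)"
  define g where "g = (D - C) * c"
  define \<eta> where "\<eta> = g / (2 * K powr e)"
  have c: "c > 0" unfolding c_def using cpos e by simp
  have K: "K > 0" unfolding K_def using D C dl by simp
  have g: "g > 0" unfolding g_def using c D by simp
  have eta: "\<eta> > 0" unfolding \<eta>_def using g K by simp
  have etaK: "\<eta> * K powr e = g / 2" unfolding \<eta>_def using K by simp
  have ev1: "eventually (\<lambda>A::real. D * A powr e + \<delta> \<le> A / 2) at_top"
    using e D C by real_asymp
  have ev2: "eventually (\<lambda>A::real. \<delta> + (C * e) * (1/2 * A) powr (e - 1) * (D * A powr e + \<delta>) < (g / 2) * A powr e) at_top"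
    using e g C D dl by (intro asymp_mixed) auto
  have ev3: "eventually (\<lambda>A::real. \<delta> < D * c * A powr e) at_top"
    using e D C c by real_asymp
  define Q where "Q = (\<lambda>A::real. (D * A powr e + \<delta> \<le> A / 2) \<and>
     (\<delta> + (C * e) * (1/2 * A) powr (e - 1) * (D * A powr e + \<delta>) < (g / 2) * A powr e) \<and>
     (\<delta> < D * c * A powr e))"
  have ev: "eventually Q at_top" unfolding Q_def using eventually_conj[OF ev1 eventually_conj[OF ev2 ev3]] by simp
  show ?thesis
  proof (rule germ_crit[OF C e eta K ev])
    fix w assume "w \<in> tube (std_power_domain D e) \<delta>"
    then obtain u where u: "u \<in> std_power_domain D e" "norm (w - u) < \<delta>"
      using tube_point U_nonempty by blast
    obtain z where z: "Re z > 0" "u = z + complex_of_real D * (1 + z) powr complex_of_real e"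
      using U_rep[OF u(1)] by blast
    define A where "A = norm (1 + z)"
    have A1: "A \<ge> 1" unfolding A_def using norm_1z z by simp
    have nP: "norm ((1 + z) powr complex_of_real e) = A powr e" unfolding A_def by (rule P_norm)
    have nDP: "norm (complex_of_real D * (1 + z) powr complex_of_real e) = D * A powr e"
      using nP D C by (simp add: norm_mult)
    have wz: "norm ((1 + w) - (1 + z)) \<le> D * A powr e + \<delta>"
    proof -
      have "(1 + w) - (1 + z) = complex_of_real D * (1 + z) powr complex_of_real e + (w - u)"
        using z(2) by (simp add: algebra_simps)
      then have "norm ((1 + w) - (1 + z)) \<le> norm (complex_of_real D * (1 + z) powr complex_of_real e) + norm (w - u)"
        by (metis norm_triangle_ineq)
      then show ?thesis using nDP u(2) by linarith
    qed
    have "norm (1 + w) \<le> norm (1 + z) + norm ((1 + w) - (1 + z))"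
      using norm_triangle_ineq[of "1 + z" "(1 + w) - (1 + z)"] by simp
    also have "\<dots> \<le> A + D * A + \<delta> * A"
    proof -
      have "D * A powr e \<le> D * A" using D C A1 e by (intro mult_left_mono powr_le_self) auto
      moreover have "\<delta> \<le> \<delta> * A" using dl A1 by simp
      ultimately show ?thesis using wz unfolding A_def by linarith
    qed
    finally have nw: "norm (1 + w) \<le> K * A" unfolding K_def by (simp add: algebra_simps)
    moreover have "Q A \<longrightarrow> Re w > 0 \<and> \<eta> * norm (1 + w) powr e < Re w - C * Re ((1 + w) powr complex_of_real e)"
    proof
      assume "Q A"
      then have Q1: "D * A powr e + \<delta> \<le> A / 2"
        and Q2: "\<delta> + (C * e) * (1/2 * A) powr (e - 1) * (D * A powr e + \<delta>) < (g / 2) * A powr e"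
        and Q3: "\<delta> < D * c * A powr e" unfolding Q_def by auto
      define E where "E = e * (A / 2) powr (e - 1) * (D * A powr e + \<delta>)"
      have pert: "norm ((1 + w) powr complex_of_real e - (1 + z) powr complex_of_real e) \<le> E"
      proof -
        have "norm ((1 + w) powr complex_of_real e - (1 + z) powr complex_of_real e)
            \<le> e * (norm (1 + z) / 2) powr (e - 1) * norm ((1 + w) - (1 + z))"
        proof (rule P_pert[OF e])
          show "1 + z \<noteq> 0" using A1 unfolding A_def by auto
          show "0 \<le> Re (1 + z)" using z by simp
          show "norm ((1 + w) - (1 + z)) \<le> norm (1 + z) / 2" using wz Q1 unfolding A_def by linarith
        qed
        also have "\<dots> \<le> E" unfolding E_def A_def using wz e unfolding A_def
          by (intro mult_left_mono) auto
        finally show ?thesis .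
      qed
      have lowP: "c * A powr e \<le> Re ((1 + z) powr complex_of_real e)"
        unfolding c_def A_def using P_Re_lower[of e "1 + z"] e z by simp
      have Rw: "Re w \<ge> Re z + D * Re ((1 + z) powr complex_of_real e) - \<delta>"
        using Re_diff_le[of u w] u(2) z(2) by (simp add: norm_minus_commute)
      have RP: "Re ((1 + w) powr complex_of_real e) \<le> Re ((1 + z) powr complex_of_real e) + E"
        using Re_diff_le[of "(1 + w) powr complex_of_real e" "(1 + z) powr complex_of_real e"] pert by simp
      have CE: "C * E < g / 2 * A powr e - \<delta>" using Q2 unfolding E_def by (simp add: algebra_simps)
      have "(D - C) * (c * A powr e) \<le> (D - C) * Re ((1 + z) powr complex_of_real e)"
        using lowP D by (intro mult_left_mono) auto
      then have m1: "g * A powr e \<le> (D - C) * Re ((1 + z) powr complex_of_real e)" unfolding g_def by simp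
      have "C * Re ((1 + w) powr complex_of_real e) \<le> C * Re ((1 + z) powr complex_of_real e) + C * E"
        using mult_left_mono[OF RP, of C] C by (simp add: algebra_simps)
      then have main: "Re w - C * Re ((1 + w) powr complex_of_real e) > g / 2 * A powr e"
        using Rw m1 CE z(1) by (simp add: algebra_simps)
      have "\<eta> * norm (1 + w) powr e \<le> \<eta> * (K powr e * A powr e)"
      proof -
        have "norm (1 + w) powr e \<le> (K * A) powr e" using nw e by (intro powr_mono2) auto
        also have "\<dots> = K powr e * A powr e" using K A1 by (simp add: powr_mult)
        finally show ?thesis using eta by (intro mult_left_mono) auto
      qed
      also have "\<dots> = g / 2 * A powr e" using etaK by (simp add: algebra_simps)
      finally have "\<eta> * norm (1 + w) powr e < Re w - C * Re ((1 + w) powr complex_of_real e)" using main by simp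
      moreover have "Re w > 0"
      proof -
        have "D * (c * A powr e) \<le> D * Re ((1 + z) powr complex_of_real e)" using lowP D C by (intro mult_left_mono) auto
        then show ?thesis using Rw Q3 z(1) by (simp add: algebra_simps)
      qed
      ultimately show "Re w > 0 \<and> \<eta> * norm (1 + w) powr e < Re w - C * Re ((1 + w) powr complex_of_real e)" by simp
    qed
    ultimately show "\<exists>A. norm (1 + w) \<le> K * A \<and> (Q A \<longrightarrow>
        Re w > 0 \<and> \<eta> * norm (1 + w) powr e < Re w - C * Re ((1 + w) powr complex_of_real e))"
      by blast
  qed
qed


lemma part3_gen:
  assumes C: "C > 0" and e: "0 < e" "e < 1" and nu: "\<nu> > 0" and Ct: "Ct > 0"
    and gpos: "\<nu> * C - Ct * \<nu> powr e > 0"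
  shows "germ_subset ((\<lambda>z. complex_of_real \<nu> * z) ` std_power_domain C e) (std_power_domain Ct e)"
proof -
  define K where "K = 1 + 2 * \<nu> + \<nu> * C"
  define c where "c = cos (e * pi / 2)"
  define g where "g = \<nu> * C - Ct * \<nu> powr e"
  define \<eta> where "\<eta> = g * c / (2 * K powr e)"
  have c: "c > 0" unfolding c_def using cpos e by simp
  have K: "K > 0" unfolding K_def using nu C by (simp add: add_pos_pos)
  have g: "g > 0" unfolding g_def using gpos by simp
  have eta: "\<eta> > 0" unfolding \<eta>_def using g K c by simp
  have etaK: "\<eta> * K powr e = g * c / 2" unfolding \<eta>_def using K by simp
  have ev1: "eventually (\<lambda>A::real. \<bar>1 - \<nu>\<bar> + \<nu> * C * A powr e \<le> \<nu> * A / 2) at_top"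
    using e nu C by real_asymp
  have ev2: "eventually (\<lambda>A::real. 0 + (Ct * e) * (\<nu> / 2 * A) powr (e - 1) * ((\<nu> * C) * A powr e + \<bar>1 - \<nu>\<bar>)
       < (g * c / 2) * A powr e) at_top"
    using e g c Ct C nu by (intro asymp_mixed) auto
  define Q where "Q = (\<lambda>A::real. (\<bar>1 - \<nu>\<bar> + \<nu> * C * A powr e \<le> \<nu> * A / 2) \<and>
     (0 + (Ct * e) * (\<nu> / 2 * A) powr (e - 1) * ((\<nu> * C) * A powr e + \<bar>1 - \<nu>\<bar>) < (g * c / 2) * A powr e))"
  have ev: "eventually Q at_top" unfolding Q_def using eventually_conj[OF ev1 ev2] by simp
  show ?thesis
  proof (rule germ_crit[OF Ct e eta K ev])
    fix w assume "w \<in> (\<lambda>z. complex_of_real \<nu> * z) ` std_power_domain C e"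
    then obtain u where u: "u \<in> std_power_domain C e" and wu: "w = complex_of_real \<nu> * u" by auto
    obtain z where z: "Re z > 0" "u = z + complex_of_real C * (1 + z) powr complex_of_real e"
      using U_rep[OF u] by blast
    define A where "A = norm (1 + z)"
    define a where "a = complex_of_real \<nu> * (1 + z)"
    have A1: "A \<ge> 1" unfolding A_def using norm_1z z by simp
    have na: "norm a = \<nu> * A" unfolding a_def A_def using nu by (simp add: norm_mult)
    have nP: "norm ((1 + z) powr complex_of_real e) = A powr e" unfolding A_def by (rule P_norm)
    have nCP: "norm (complex_of_real (\<nu> * C) * (1 + z) powr complex_of_real e) = \<nu> * C * A powr e"
      using nP nu C by (simp add: norm_mult)
    have wa: "norm ((1 + w) - a) \<le> \<bar>1 - \<nu>\<bar> + \<nu> * C * A powr e"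
    proof -
      have "(1 + w) - a = complex_of_real (1 - \<nu>) + complex_of_real (\<nu> * C) * (1 + z) powr complex_of_real e"
        unfolding a_def wu z(2) by (simp add: algebra_simps)
      then have "norm ((1 + w) - a) \<le> norm (complex_of_real (1 - \<nu>)) + norm (complex_of_real (\<nu> * C) * (1 + z) powr complex_of_real e)"
        by (metis norm_triangle_ineq)
      moreover have "norm (complex_of_real (1 - \<nu>)) = \<bar>1 - \<nu>\<bar>" by (rule norm_of_real)
      ultimately show ?thesis using nCP by linarith
    qed
    have "norm (1 + w) \<le> norm a + norm ((1 + w) - a)"
      using norm_triangle_ineq[of a "(1 + w) - a"] by simp
    also have "\<dots> \<le> \<nu> * A + (1 + \<nu>) * A + \<nu> * C * A"
    proof -
      have "\<nu> * C * A powr e \<le> \<nu> * C * A" using nu C A1 e by (intro mult_left_mono powr_le_self) auto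
      moreover have "\<bar>1 - \<nu>\<bar> \<le> (1 + \<nu>) * A"
      proof -
        have "\<bar>1 - \<nu>\<bar> \<le> 1 + \<nu>" using nu by simp
        also have "\<dots> \<le> (1 + \<nu>) * A" using A1 nu by simp
        finally show ?thesis .
      qed
      ultimately show ?thesis using wa na by linarith
    qed
    finally have nw: "norm (1 + w) \<le> K * A" unfolding K_def by (simp add: algebra_simps)
    moreover have "Q A \<longrightarrow> Re w > 0 \<and> \<eta> * norm (1 + w) powr e < Re w - Ct * Re ((1 + w) powr complex_of_real e)"
    proof
      assume "Q A"
      then have Q1: "\<bar>1 - \<nu>\<bar> + \<nu> * C * A powr e \<le> \<nu> * A / 2"
        and Q2: "0 + (Ct * e) * (\<nu> / 2 * A) powr (e - 1) * ((\<nu> * C) * A powr e + \<bar>1 - \<nu>\<bar>) < (g * c / 2) * A powr e"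
        unfolding Q_def by auto
      define E where "E = e * (\<nu> * A / 2) powr (e - 1) * (\<nu> * C * A powr e + \<bar>1 - \<nu>\<bar>)"
      have pert: "norm ((1 + w) powr complex_of_real e - a powr complex_of_real e) \<le> E"
      proof -
        have "norm ((1 + w) powr complex_of_real e - a powr complex_of_real e)
            \<le> e * (norm a / 2) powr (e - 1) * norm ((1 + w) - a)"
        proof (rule P_pert[OF e])
          show "a \<noteq> 0" using na A1 nu by auto
          show "0 \<le> Re a" using z nu unfolding a_def by simp
          show "norm ((1 + w) - a) \<le> norm a / 2" using wa Q1 na by linarith
        qed
        also have "\<dots> \<le> E" unfolding E_def na using wa e
          by (intro mult_left_mono) (auto simp: algebra_simps)
        finally show ?thesis .
      qed
      have Pa: "a powr complex_of_real e = complex_of_real (\<nu> powr e) * (1 + z) powr complex_of_real e"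
        unfolding a_def by (rule P_scale[OF nu])
      have lowP: "c * A powr e \<le> Re ((1 + z) powr complex_of_real e)"
        unfolding c_def A_def using P_Re_lower[of e "1 + z"] e z by simp
      have Rw: "Re w = \<nu> * Re z + \<nu> * C * Re ((1 + z) powr complex_of_real e)"
        unfolding wu z(2) by (simp add: algebra_simps)
      have RP: "Re ((1 + w) powr complex_of_real e) \<le> \<nu> powr e * Re ((1 + z) powr complex_of_real e) + E"
        using Re_diff_le[of "(1 + w) powr complex_of_real e" "a powr complex_of_real e"] pert Pa by simp
      have CE: "Ct * E < g * c / 2 * A powr e" using Q2 unfolding E_def by (simp add: algebra_simps)
      define X where "X = Re ((1 + z) powr complex_of_real e)"
      define Y where "Y = Re ((1 + w) powr complex_of_real e)"
      define Z where "Z = g * c * A powr e"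
      have m1: "Z \<le> g * X" unfolding Z_def X_def using mult_left_mono[OF lowP, of g] g by (simp add: algebra_simps)
      have m2: "Ct * Y \<le> Ct * (\<nu> powr e * X) + Ct * E"
        unfolding X_def Y_def using mult_left_mono[OF RP, of Ct] Ct by (simp add: algebra_simps)
      have m3: "0 \<le> \<nu> * Re z" using nu z by simp
      have G: "g * X = \<nu> * C * X - Ct * (\<nu> powr e * X)" unfolding g_def by (simp add: algebra_simps)
      have Rw': "Re w = \<nu> * Re z + \<nu> * C * X" using Rw unfolding X_def .
      have CE': "Ct * E < Z / 2" using CE unfolding Z_def by simp
      have "Re w - Ct * Y > Z / 2" using m1 m2 m3 G Rw' CE' by linarith
      then have main: "Re w - Ct * Re ((1 + w) powr complex_of_real e) > g * c / 2 * A powr e"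
        unfolding Y_def Z_def by simp
      have "\<eta> * norm (1 + w) powr e \<le> \<eta> * (K powr e * A powr e)"
      proof -
        have "norm (1 + w) powr e \<le> (K * A) powr e" using nw e by (intro powr_mono2) auto
        also have "\<dots> = K powr e * A powr e" using K A1 by (simp add: powr_mult)
        finally show ?thesis using eta by (intro mult_left_mono) auto
      qed
      also have "\<dots> = g * c / 2 * A powr e" using etaK by (simp add: algebra_simps)
      finally have "\<eta> * norm (1 + w) powr e < Re w - Ct * Re ((1 + w) powr complex_of_real e)" using main by simp
      moreover have "Re w > 0"
      proof -
        have "0 \<le> c * A powr e" using c by simp
        then have "0 \<le> \<nu> * C * Re ((1 + z) powr complex_of_real e)" using lowP nu C by simp
        then show ?thesis using Rw z(1) nu by (simp add: add_pos_nonneg)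
      qed
      ultimately show "Re w > 0 \<and> \<eta> * norm (1 + w) powr e < Re w - Ct * Re ((1 + w) powr complex_of_real e)" by simp
    qed
    ultimately show "\<exists>A. norm (1 + w) \<le> K * A \<and> (Q A \<longrightarrow>
        Re w > 0 \<and> \<eta> * norm (1 + w) powr e < Re w - Ct * Re ((1 + w) powr complex_of_real e))"
      by blast
  qed
qed

lemma germ_refl: "germ_subset A A"
  unfolding germ_subset_def by (intro exI[of _ 1]) auto

lemma part3a:
  assumes C: "C > 0" and e: "0 < e" "e < 1" and nu: "0 < \<nu>" "\<nu> \<le> 1"
  shows "germ_subset ((\<lambda>z. complex_of_real \<nu> * z) ` std_power_domain C e) (std_power_domain (\<nu> * C) e)"
proof (cases "\<nu> = 1")
  case True then show ?thesis by (simp add: germ_refl)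
next
  case False
  then have nu1: "\<nu> < 1" using nu by simp
  have "\<nu> powr e < 1 powr e" using nu nu1 e by (intro powr_less_mono2) auto
  then have "\<nu> powr e < 1" by simp
  then have "\<nu> * C * \<nu> powr e < \<nu> * C * 1" using nu C by (intro mult_strict_left_mono) auto
  then have "\<nu> * C - \<nu> * C * \<nu> powr e > 0" by simp
  then show ?thesis using part3_gen[OF C e nu(1), of "\<nu> * C"] nu C by simp
qed

lemma part3b:
  assumes C: "C > 0" and e: "0 < e" "e < 1" and nu: "1 \<le> \<nu>"
  shows "germ_subset ((\<lambda>z. complex_of_real \<nu> * z) ` std_power_domain C e) (std_power_domain C e)"
proof (cases "\<nu> = 1")
  case True then show ?thesis by (simp add: germ_refl)
next
  case False
  then have nu1: "\<nu> > 1" using nu by simp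
  have "\<nu> powr e < \<nu> powr 1" using nu1 e by (intro powr_less_mono) auto
  then have "C * \<nu> powr e < C * \<nu>" using C nu1 by simp
  then have "\<nu> * C - C * \<nu> powr e > 0" by (simp add: algebra_simps)
  then show ?thesis using part3_gen[OF C e, of \<nu> C] nu1 C by simp
qed


lemma powr_subadd:
  fixes a b e :: real
  assumes a: "a \<ge> 0" and b: "b \<ge> 0" and e: "0 < e" "e \<le> 1"
  shows "(a + b) powr e \<le> a powr e + b powr e"
proof (cases "a + b = 0")
  case True then have "a = 0" "b = 0" using a b by auto
  then show ?thesis by simp
next
  case False
  then have s: "a + b > 0" using a b by simp
  have h: "x \<le> x powr e" if "0 \<le> x" "x \<le> 1" for x :: real
    using powr_mono'[of e 1 x] that e by simp
  have ha: "a / (a + b) \<le> (a / (a + b)) powr e" using a b s by (intro h) auto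
  have hb: "b / (a + b) \<le> (b / (a + b)) powr e" using a b s by (intro h) auto
  have "(a + b) powr e = (a + b) powr e * (a / (a + b) + b / (a + b))"
    using s by (simp add: add_divide_distrib[symmetric])
  also have "\<dots> \<le> (a + b) powr e * ((a / (a + b)) powr e + (b / (a + b)) powr e)"
    using ha hb by (intro mult_left_mono) auto
  also have "\<dots> = a powr e + b powr e"
    using s by (simp add: powr_divide distrib_left)
  finally show ?thesis .
qed

lemma seg_Im:
  assumes "\<xi> \<in> closed_segment (Complex 0 y) (Complex x y)"
  shows "Im \<xi> = y"
proof -
  from assms obtain u where "\<xi> = (1 - u) *\<^sub>R Complex 0 y + u *\<^sub>R Complex x y"
    unfolding closed_segment_def by blast
  then have "Im \<xi> = Im ((1 - u) *\<^sub>R Complex 0 y + u *\<^sub>R Complex x y)" by simp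
  also have "\<dots> = (1 - u) * y + u * y" by simp
  also have "\<dots> = y" by (simp add: algebra_simps)
  finally show ?thesis .
qed

lemma Im_Ln_imag:
  assumes "y \<noteq> 0"
  shows "cos (e * Im (Ln (Complex 0 y))) = cos (e * pi / 2)"
proof -
  have eq: "Complex 0 y = \<i> * complex_of_real y" by (simp add: complex_eq_iff)
  have nz: "complex_of_real y \<noteq> 0" using assms by simp
  show ?thesis
  proof (cases "y > 0")
    case True
    have "Ln (Complex 0 y) = Ln (complex_of_real y) + \<i> * of_real pi / 2"
      unfolding eq using Ln_times_ii[OF nz] True by simp
    moreover have "Ln (complex_of_real y) = complex_of_real (ln y)" using True by (simp add: Ln_of_real)
    ultimately have "Im (Ln (Complex 0 y)) = pi / 2" by simp
    then have "e * Im (Ln (Complex 0 y)) = e * pi / 2" by simp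
    then show ?thesis by (rule arg_cong)
  next
    case False
    then have yn: "y < 0" using assms by simp
    have "Ln (Complex 0 y) = Ln (complex_of_real y) - \<i> * of_real (3 * pi / 2)"
      unfolding eq using Ln_times_ii[OF nz] yn by simp
    moreover have "Im (Ln (complex_of_real y)) = pi" using Im_Ln_eq_pi[OF nz] yn by simp
    ultimately have "Im (Ln (Complex 0 y)) = - (pi / 2)" by simp
    then have "e * Im (Ln (Complex 0 y)) = - (e * pi / 2)" by simp
    then have "cos (e * Im (Ln (Complex 0 y))) = cos (- (e * pi / 2))" by (rule arg_cong)
    then show ?thesis by (simp only: cos_minus)
  qed
qed

lemma P_Re_upper:
  assumes e: "0 < e" "e < 1" and x: "x \<ge> 0"
  shows "Re (Complex x y powr complex_of_real e) \<le> 2 * x powr e + cos (e * pi / 2) * \<bar>y\<bar> powr e"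
proof -
  have c: "cos (e * pi / 2) > 0" using cpos e by simp
  show ?thesis
  proof (cases "x \<le> \<bar>y\<bar> \<and> y \<noteq> 0")
    case False
    then have yx: "\<bar>y\<bar> \<le> x" using x by auto
    have "Re (Complex x y powr complex_of_real e) \<le> norm (Complex x y) powr e" by (rule Re_P_le)
    also have "\<dots> \<le> (2 * x) powr e"
      using cmod_le[of "Complex x y"] yx x e by (intro powr_mono2) auto
    also have "\<dots> = 2 powr e * x powr e" using x by (simp add: powr_mult)
    also have "\<dots> \<le> 2 * x powr e"
      using powr_mono[of e 1 2] e by (intro mult_right_mono) auto
    finally show ?thesis using c by (smt (verit) mult_nonneg_nonneg powr_ge_zero)
  next
    case True
    then have xy: "x \<le> \<bar>y\<bar>" and y0: "y \<noteq> 0" by auto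
    have ay: "\<bar>y\<bar> > 0" using y0 by simp
    have lip: "norm (Complex x y powr complex_of_real e - Complex 0 y powr complex_of_real e)
        \<le> e * \<bar>y\<bar> powr (e - 1) * norm (Complex x y - Complex 0 y)"
    proof (rule P_lip[OF e ay])
      fix \<xi> assume "\<xi> \<in> closed_segment (Complex 0 y) (Complex x y)"
      then have "Im \<xi> = y" by (rule seg_Im)
      then show "\<xi> \<notin> \<real>\<^sub>\<le>\<^sub>0 \<and> \<bar>y\<bar> \<le> norm \<xi>"
        using y0 abs_Im_le_cmod[of \<xi>] by (auto simp: complex_nonpos_Reals_iff)
    qed
    have "Complex x y - Complex 0 y = complex_of_real x" by (simp add: complex_eq_iff)
    then have nd: "norm (Complex x y - Complex 0 y) = x" using x by simp
    have "e * \<bar>y\<bar> powr (e - 1) * x \<le> x powr e"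
    proof (cases "x = 0")
      case True then show ?thesis by simp
    next
      case False
      then have xp: "x > 0" using x by simp
      have "\<bar>y\<bar> powr (e - 1) \<le> x powr (e - 1)" using xp xy e by (intro powr_mono2') auto
      then have "\<bar>y\<bar> powr (e - 1) * x \<le> x powr (e - 1) * x" using xp by (intro mult_right_mono) auto
      also have "\<dots> = x powr e" using xp by (simp add: powr_add[of x "e - 1" 1, simplified])
      finally have "\<bar>y\<bar> powr (e - 1) * x \<le> x powr e" .
      moreover have "e * (\<bar>y\<bar> powr (e - 1) * x) \<le> 1 * (\<bar>y\<bar> powr (e - 1) * x)"
        using e xp by (intro mult_right_mono) auto
      ultimately show ?thesis by (simp add: mult.assoc)
    qed
    then have d: "norm (Complex x y powr complex_of_real e - Complex 0 y powr complex_of_real e) \<le> x powr e"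
      using lip nd by simp
    have "Re (Complex 0 y powr complex_of_real e) = norm (Complex 0 y) powr e * cos (e * Im (Ln (Complex 0 y)))"
      using y0 by (intro P_Re_formula) (simp add: complex_eq_iff)
    also have "\<dots> = \<bar>y\<bar> powr e * cos (e * pi / 2)"
      using Im_Ln_imag[OF y0, of e] by (simp add: complex_norm)
    finally have Ra: "Re (Complex 0 y powr complex_of_real e) = cos (e * pi / 2) * \<bar>y\<bar> powr e" by simp
    have "Re (Complex x y powr complex_of_real e) \<le> Re (Complex 0 y powr complex_of_real e)
        + norm (Complex x y powr complex_of_real e - Complex 0 y powr complex_of_real e)"
      by (rule Re_diff_le)
    then show ?thesis using Ra d by (smt (verit) powr_ge_zero)
  qed
qed


lemma norm4: "norm (a + b + c + d) \<le> norm a + norm b + norm c + norm (d::complex)"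
  using norm_triangle_ineq[of "a + b + c" d] norm_triangle_ineq[of "a + b" c] norm_triangle_ineq[of a b]
  by linarith

lemma part4:
  assumes C: "C > 0" and e: "0 < e" "e < 1"
  shows "germ_subset {x + y | x y. x \<in> std_power_domain C e \<and> y \<in> std_power_domain C e}
                  (std_power_domain (C / 2) e)"
proof -
  define c where "c = cos (e * pi / 2)"
  define K where "K = 2 + C"
  define \<eta> where "\<eta> = C * c / (8 * K powr e)"
  have c: "c > 0" unfolding c_def using cpos e by simp
  have K: "K > 0" unfolding K_def using C by simp
  have eta: "\<eta> > 0" unfolding \<eta>_def using C c K by simp
  have etaK: "\<eta> * K powr e = C * c / 8" unfolding \<eta>_def using K by simp
  have C2: "C / 2 > 0" using C by simp
  have evs: "eventually (\<lambda>s::real. C * (1 + s) powr e \<le> s) at_top" using C e by real_asymp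
  then obtain s0 where s0: "\<And>s. s \<ge> s0 \<Longrightarrow> C * (1 + s) powr e \<le> s"
    unfolding eventually_at_top_linorder by blast
  define L1 where "L1 = C * (1 + max s0 0) powr e"
  have L1: "C * (1 + s) powr e \<le> s + L1" if "s \<ge> 0" for s
  proof (cases "s \<ge> s0")
    case True
    then have "C * (1 + s) powr e \<le> s" by (rule s0)
    moreover have "L1 \<ge> 0" unfolding L1_def using C by simp
    ultimately show ?thesis by simp
  next
    case False
    then have "(1 + s) powr e \<le> (1 + max s0 0) powr e" using that e by (intro powr_mono2) auto
    then have "C * (1 + s) powr e \<le> L1" unfolding L1_def using C by simp
    then show ?thesis using that by simp
  qed
  have evt1: "eventually (\<lambda>t::real. L1 < (C * c / 8) * t) at_top" using C c by real_asymp
  have evt2: "eventually (\<lambda>t::real. (C * (1 + c / 2)) * (C * t) powr e < (C * c / 4) * t) at_top"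
    using C c e by real_asymp
  obtain t0 where t0: "\<And>t. t \<ge> t0 \<Longrightarrow> L1 < (C * c / 8) * t \<and> (C * (1 + c / 2)) * (C * t) powr e < (C * c / 4) * t"
    using eventually_conj[OF evt1 evt2] unfolding eventually_at_top_linorder by blast
  have ev: "eventually (\<lambda>A::real. t0 \<le> A powr e) at_top" using e by real_asymp
  show ?thesis
  proof (rule germ_crit[OF C2 e eta K ev])
    fix w assume "w \<in> {x + y | x y. x \<in> std_power_domain C e \<and> y \<in> std_power_domain C e}"
    then obtain x1 x2 where xs: "x1 \<in> std_power_domain C e" "x2 \<in> std_power_domain C e" and w: "w = x1 + x2"
      by blast
    obtain z1 where z1: "Re z1 > 0" "x1 = z1 + complex_of_real C * (1 + z1) powr complex_of_real e"
      using U_rep[OF xs(1)] by blast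
    obtain z2 where z2: "Re z2 > 0" "x2 = z2 + complex_of_real C * (1 + z2) powr complex_of_real e"
      using U_rep[OF xs(2)] by blast
    define P1 where "P1 = (1 + z1) powr complex_of_real e"
    define P2 where "P2 = (1 + z2) powr complex_of_real e"
    define A1 where "A1 = norm (1 + z1)"
    define A2 where "A2 = norm (1 + z2)"
    define A where "A = A1 + A2"
    define Sm where "Sm = A1 powr e + A2 powr e"
    have A11: "A1 \<ge> 1" unfolding A1_def using norm_1z z1 by simp
    have A21: "A2 \<ge> 1" unfolding A2_def using norm_1z z2 by simp
    have nP1: "norm P1 = A1 powr e" unfolding P1_def A1_def by (rule P_norm)
    have nP2: "norm P2 = A2 powr e" unfolding P2_def A2_def by (rule P_norm)
    have A1e: "A1 powr e \<le> A1" using A11 e by (intro powr_le_self) auto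
    have A2e: "A2 powr e \<le> A2" using A21 e by (intro powr_le_self) auto
    have w1: "1 + w = (1 + z1) + (1 + z2) + complex_of_real C * P1 + complex_of_real C * P2 - 1"
      unfolding w z1(2) z2(2) P1_def P2_def by (simp add: algebra_simps)
    have "norm (1 + w) \<le> norm ((1 + z1) + (1 + z2) + complex_of_real C * P1 + complex_of_real C * P2) + norm (1::complex)"
      unfolding w1 by (rule norm_triangle_ineq4)
    also have "\<dots> \<le> A1 + A2 + C * A1 powr e + C * A2 powr e + 1"
    proof -
      have "norm ((1 + z1) + (1 + z2) + complex_of_real C * P1 + complex_of_real C * P2)
          \<le> norm (1 + z1) + norm (1 + z2) + norm (complex_of_real C * P1) + norm (complex_of_real C * P2)"
        by (rule norm4)
      moreover have "norm (complex_of_real C * P1) = C * A1 powr e" using nP1 C by (simp add: norm_mult)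
      moreover have "norm (complex_of_real C * P2) = C * A2 powr e" using nP2 C by (simp add: norm_mult)
      ultimately show ?thesis unfolding A1_def A2_def by simp
    qed
    also have "\<dots> \<le> K * A"
    proof -
      have "C * A1 powr e \<le> C * A1" using A1e C by simp
      moreover have "C * A2 powr e \<le> C * A2" using A2e C by simp
      ultimately show ?thesis unfolding K_def A_def using A11 A21 by (simp add: algebra_simps)
    qed
    finally have nw: "norm (1 + w) \<le> K * A" .
    moreover have "t0 \<le> A powr e \<longrightarrow> Re w > 0 \<and> \<eta> * norm (1 + w) powr e < Re w - C / 2 * Re ((1 + w) powr complex_of_real e)"
    proof
      assume Q: "t0 \<le> A powr e"
      have ASm: "A powr e \<le> Sm" unfolding A_def Sm_def using A11 A21 e by (intro powr_subadd) auto
      then have T: "L1 < (C * c / 8) * Sm \<and> (C * (1 + c / 2)) * (C * Sm) powr e < (C * c / 4) * Sm"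
        using Q t0 by simp
      define s where "s = Re z1 + Re z2"
      have s0': "s > 0" unfolding s_def using z1 z2 by simp
      have lo1: "c * A1 powr e \<le> Re P1" unfolding c_def P1_def A1_def using P_Re_lower[of e "1 + z1"] e z1 by simp
      have lo2: "c * A2 powr e \<le> Re P2" unfolding c_def P2_def A2_def using P_Re_lower[of e "1 + z2"] e z2 by simp
      have up1: "Re P1 \<le> A1 powr e" using complex_Re_le_cmod[of P1] nP1 by simp
      have up2: "Re P2 \<le> A2 powr e" using complex_Re_le_cmod[of P2] nP2 by simp
      have im1: "\<bar>Im P1\<bar> \<le> A1 powr e" using abs_Im_le_cmod[of P1] nP1 by simp
      have im2: "\<bar>Im P2\<bar> \<le> A2 powr e" using abs_Im_le_cmod[of P2] nP2 by simp
      have iz1: "\<bar>Im z1\<bar> \<le> A1" unfolding A1_def using abs_Im_le_cmod[of "1 + z1"] by simp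
      have iz2: "\<bar>Im z2\<bar> \<le> A2" unfolding A2_def using abs_Im_le_cmod[of "1 + z2"] by simp
      define X where "X = Re (1 + w)"
      define Y where "Y = Im (1 + w)"
      have Xe: "X = 1 + s + C * Re P1 + C * Re P2" unfolding X_def w1 s_def by simp
      have Ye: "Y = Im z1 + Im z2 + C * Im P1 + C * Im P2" unfolding Y_def w1 by simp
      have cA: "0 \<le> c * A1 powr e" "0 \<le> c * A2 powr e" using c by auto
      have X0: "X \<ge> 0" using Xe lo1 lo2 cA s0' C by (smt (verit) mult_nonneg_nonneg)
      have Xle: "X \<le> (1 + s) + C * Sm"
        using Xe up1 up2 C unfolding Sm_def by (smt (verit) distrib_left mult_left_mono)
      have Yle: "\<bar>Y\<bar> \<le> (\<bar>Im z1\<bar> + \<bar>Im z2\<bar>) + C * Sm"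
      proof -
        have "\<bar>C * Im P1\<bar> \<le> C * A1 powr e" using im1 C by (simp add: abs_mult)
        moreover have "\<bar>C * Im P2\<bar> \<le> C * A2 powr e" using im2 C by (simp add: abs_mult)
        ultimately show ?thesis unfolding Ye Sm_def by (simp add: algebra_simps)
      qed
      define V where "V = (C * Sm) powr e"
      have Sm0: "Sm \<ge> 0" unfolding Sm_def by simp
      have Xe': "X powr e \<le> (1 + s) powr e + V"
      proof -
        have "X powr e \<le> ((1 + s) + C * Sm) powr e" using X0 Xle e by (intro powr_mono2) auto
        also have "\<dots> \<le> (1 + s) powr e + V" unfolding V_def using s0' C Sm0 e by (intro powr_subadd) auto
        finally show ?thesis .
      qed
      have Ye': "\<bar>Y\<bar> powr e \<le> Sm + V"
      proof -
        have "\<bar>Y\<bar> powr e \<le> ((\<bar>Im z1\<bar> + \<bar>Im z2\<bar>) + C * Sm) powr e" using Yle e by (intro powr_mono2) auto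
        also have "\<dots> \<le> (\<bar>Im z1\<bar> + \<bar>Im z2\<bar>) powr e + V" unfolding V_def using C Sm0 e by (intro powr_subadd) auto
        also have "(\<bar>Im z1\<bar> + \<bar>Im z2\<bar>) powr e \<le> \<bar>Im z1\<bar> powr e + \<bar>Im z2\<bar> powr e" using e by (intro powr_subadd) auto
        also have "\<bar>Im z1\<bar> powr e \<le> A1 powr e" using iz1 e by (intro powr_mono2) auto
        also have "\<bar>Im z2\<bar> powr e \<le> A2 powr e" using iz2 e by (intro powr_mono2) auto
        finally show ?thesis unfolding Sm_def by simp
      qed
      have "Re (Complex X Y powr complex_of_real e) \<le> 2 * X powr e + c * \<bar>Y\<bar> powr e"
        unfolding c_def using P_Re_upper[OF e X0] .
      moreover have "Complex X Y = 1 + w" unfolding X_def Y_def by (rule complex_surj)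
      ultimately have RPw: "Re ((1 + w) powr complex_of_real e) \<le> 2 * X powr e + c * \<bar>Y\<bar> powr e"
        by simp
      define W where "W = (1 + s) powr e"
      have RPw2: "Re ((1 + w) powr complex_of_real e) \<le> 2 * W + 2 * V + c * Sm + c * V"
      proof -
        have "c * \<bar>Y\<bar> powr e \<le> c * (Sm + V)" using Ye' c by (intro mult_left_mono) auto
        then show ?thesis using RPw Xe' unfolding W_def by (simp add: algebra_simps)
      qed
      have Rw: "Re w = s + C * Re P1 + C * Re P2" unfolding w z1(2) z2(2) P1_def P2_def s_def by simp
      have Rw2: "Re w \<ge> s + C * c * Sm"
      proof -
        have "C * (c * A1 powr e) \<le> C * Re P1" using lo1 C by (intro mult_left_mono) auto
        moreover have "C * (c * A2 powr e) \<le> C * Re P2" using lo2 C by (intro mult_left_mono) auto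
        ultimately show ?thesis unfolding Rw Sm_def by (simp add: algebra_simps)
      qed
      have LW: "C * W \<le> s + L1" unfolding W_def using L1 s0' by simp
      have CR: "C / 2 * Re ((1 + w) powr complex_of_real e) \<le> C * W + C * V + (C * c / 2) * Sm + (C * c / 2) * V"
        using mult_left_mono[OF RPw2, of "C / 2"] C by (simp add: algebra_simps)
      have T1: "L1 < (C * c / 8) * Sm" and T2: "(C * (1 + c / 2)) * V < (C * c / 4) * Sm"
        using T unfolding V_def by auto
      have T2': "C * V + (C * c / 2) * V < (C * c / 4) * Sm" using T2 by (simp add: algebra_simps)
      have CcSm: "C * c * Sm = 2 * ((C * c / 2) * Sm)" by simp
      have main: "Re w - C / 2 * Re ((1 + w) powr complex_of_real e) > (C * c / 8) * Sm"
        using Rw2 CR LW T1 T2' CcSm by (simp add: algebra_simps)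
      have "\<eta> * norm (1 + w) powr e \<le> \<eta> * (K powr e * Sm)"
      proof -
        have "norm (1 + w) powr e \<le> (K * A) powr e" using nw e by (intro powr_mono2) auto
        also have "\<dots> = K powr e * A powr e" using K A11 A21 unfolding A_def by (simp add: powr_mult)
        also have "\<dots> \<le> K powr e * Sm" using ASm K by (intro mult_left_mono) auto
        finally show ?thesis using eta by (intro mult_left_mono) auto
      qed
      also have "\<dots> = (C * c / 8) * Sm" using etaK by (simp add: algebra_simps)
      finally have "\<eta> * norm (1 + w) powr e < Re w - C / 2 * Re ((1 + w) powr complex_of_real e)" using main by simp
      moreover have "Re w > 0"
      proof -
        have "0 \<le> C * c * Sm" using C c Sm0 by simp
        then show ?thesis using Rw2 s0' by linarith
      qed
      ultimately show "Re w > 0 \<and> \<eta> * norm (1 + w) powr e < Re w - C / 2 * Re ((1 + w) powr complex_of_real e)" by simp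
    qed
    ultimately show "\<exists>A. norm (1 + w) \<le> K * A \<and> (t0 \<le> A powr e \<longrightarrow>
        Re w > 0 \<and> \<eta> * norm (1 + w) powr e < Re w - C / 2 * Re ((1 + w) powr complex_of_real e))"
      by blast
  qed
qed


theorem lemma3p2:
  fixes C eps :: real
  assumes "C > 0" and "0 < eps" and "eps < 1"
  shows "(\<forall>D eps' \<delta>. D > 0 \<longrightarrow> eps < eps' \<longrightarrow> eps' < 1 \<longrightarrow> \<delta> > 0 \<longrightarrow>
            germ_subset (tube (std_power_domain D eps') \<delta>) (std_power_domain C eps))
    \<and> (\<forall>D \<delta>. D > C \<longrightarrow> \<delta> > 0 \<longrightarrow>
            germ_subset (tube (std_power_domain D eps) \<delta>) (std_power_domain C eps))
    \<and> (\<forall>\<nu>. 0 < \<nu> \<longrightarrow> \<nu> \<le> 1 \<longrightarrow>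
            germ_subset ((\<lambda>z. complex_of_real \<nu> * z) ` std_power_domain C eps)
                        (std_power_domain (\<nu> * C) eps))
    \<and> (\<forall>\<nu>. 1 \<le> \<nu> \<longrightarrow>
            germ_subset ((\<lambda>z. complex_of_real \<nu> * z) ` std_power_domain C eps)
                        (std_power_domain C eps))
    \<and> germ_subset {x + y | x y. x \<in> std_power_domain C eps \<and> y \<in> std_power_domain C eps}
                  (std_power_domain (C / 2) eps)
    \<and> (\<forall>U. is_std_power_domain U \<longrightarrow>
          (\<exists>a>0. germ_subset (Ln ` std_power_domain C eps \<inter> Hplane a) (U \<inter> Hplane a)))"
  using part1[OF assms] part2[OF assms] part3a[OF assms] part3b[OF assms] part4[OF assms]
    part5[OF _ assms]
  by blast

end
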